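(* Let $x_0, x_1, x_2, \dots \in \mathbb{R}^m$ be a sequence of sparse vectors with supports $\mathcal{N}_t := \operatorname{supp}(x_t)$, observed noise-free as $y_t := A_t x_t$ with $A_t \in \mathbb{R}^{n_t \times m}$. Let $s_t := |\mathcal{N}_t|$, $u_t := |\mathcal{N}_t \setminus \mathcal{N}_{t-1}|$ and $e_t := |\mathcal{N}_{t-1} \setminus \mathcal{N}_t|$. Run the following recursive procedure (dynamic Modified-CS with $\epsilon = 0$, $\alpha = 0$): at $t=0$, let $\hat{x}_0$ be a solution of $\min_b \|b\|_1$ subject to $y_0 = A_0 b$, and set $\hat{\mathcal{N}}_0 := \{i : (\hat{x}_0)_i \neq 0\}$; for each $t > 0$, set $\mathcal{T} := \hat{\mathcal{N}}_{t-1}$, let $\hat{x}_t$ be a solution of $\min_b \|b_{\mathcal{T}^c}\|_1$ subject to $y_t = A_t b$, and set $\hat{\mathcal{N}}_t := \{i : (\hat{x}_t)_i \neq 0\}$. If $\delta_{2 s_0}(A_0) \le 0.2$ and, for all $t > 0$, $\delta_{s_t + u_t + e_t}(A_t) \le 0.2$, then $\hat{x}_t = x_t$ (exact recovery, with the minimizer unique) for all $t \ge 0$.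
   Context: For a vector $v$ and index set $\mathcal{T} \subseteq \{1,\dots,m\}$, $v_{\mathcal{T}}$ is the subvector of entries indexed by $\mathcal{T}$, and $\mathcal{T}^c$ is the complement of $\mathcal{T}$ in $\{1,\dots,m\}$. The restricted isometry constant $\delta_s(A)$ of a matrix $A$ is the smallest real number $\delta$ such that $(1-\delta)\|b\|_2^2 \le \|Ab\|_2^2 \le (1+\delta)\|b\|_2^2$ for all vectors $b$ with at most $s$ nonzero entries. *)

theory Defs
  imports "HOL-Analysis.Analysis"
begin

text \<open>Vectors in R^m are modelled as real^'m (the finite index type 'm stands for
  {1..m}).  A matrix with k rows and m columns is modelled as a function
  M :: nat => 'm => real of which only the rows i < k are relevant.\<close>

definition supp :: "real ^ 'm \<Rightarrow> 'm set" where
  "supp b = {i. b $ i \<noteq> 0}"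

definition mat_vec :: "(nat \<Rightarrow> 'm::finite \<Rightarrow> real) \<Rightarrow> real ^ 'm \<Rightarrow> nat \<Rightarrow> real" where
  "mat_vec M b i = (\<Sum>j\<in>UNIV. M i j * b $ j)"

definition mat_vec_norm2 :: "nat \<Rightarrow> (nat \<Rightarrow> 'm::finite \<Rightarrow> real) \<Rightarrow> real ^ 'm \<Rightarrow> real" where
  "mat_vec_norm2 k M b = (\<Sum>i<k. (mat_vec M b i)\<^sup>2)"

definition ric :: "nat \<Rightarrow> (nat \<Rightarrow> 'm::finite \<Rightarrow> real) \<Rightarrow> nat \<Rightarrow> real" where
  "ric k M s = Inf {\<delta>. \<forall>b :: real ^ 'm. card (supp b) \<le> s \<longrightarrow>
       (1 - \<delta>) * (norm b)\<^sup>2 \<le> mat_vec_norm2 k M b \<and>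
       mat_vec_norm2 k M b \<le> (1 + \<delta>) * (norm b)\<^sup>2}"

definition feasible :: "nat \<Rightarrow> (nat \<Rightarrow> 'm::finite \<Rightarrow> real) \<Rightarrow> real ^ 'm \<Rightarrow> real ^ 'm \<Rightarrow> bool" where
  "feasible k M x b \<longleftrightarrow> (\<forall>i<k. mat_vec M b i = mat_vec M x i)"

definition l1_off :: "'m::finite set \<Rightarrow> real ^ 'm \<Rightarrow> real" where
  "l1_off T b = (\<Sum>i\<in>- T. \<bar>b $ i\<bar>)"

text \<open>b solves  min_b |b_{T^c}|_1  subject to  M x = M b.  (T = {} gives plain l1 minimisation.)\<close>
definition is_modcs_sol :: "nat \<Rightarrow> (nat \<Rightarrow> 'm::finite \<Rightarrow> real) \<Rightarrow> 'm set \<Rightarrow> real ^ 'm \<Rightarrow> real ^ 'm \<Rightarrow> bool" where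
  "is_modcs_sol k M T x b \<longleftrightarrow> feasible k M x b \<and>
     (\<forall>b'. feasible k M x b' \<longrightarrow> l1_off T b \<le> l1_off T b')"

end

theory Submission
  imports Defs
begin


definition restr :: "real ^ 'm \<Rightarrow> 'm set \<Rightarrow> real ^ 'm" where
  "restr h U = (\<chi> i. if i \<in> U then h $ i else 0)"

definition Qf :: "nat \<Rightarrow> (nat \<Rightarrow> 'm::finite \<Rightarrow> real) \<Rightarrow> real ^ 'm \<Rightarrow> real ^ 'm \<Rightarrow> real" where
  "Qf k M u v = (\<Sum>i<k. mat_vec M u i * mat_vec M v i)"

definition rip :: "nat \<Rightarrow> (nat \<Rightarrow> 'm::finite \<Rightarrow> real) \<Rightarrow> nat \<Rightarrow> real \<Rightarrow> bool" where
  "rip k M s d \<longleftrightarrow> (\<forall>b :: real ^ 'm. card (supp b) \<le> s \<longrightarrow>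
       (1 - d) * (norm b)\<^sup>2 \<le> Qf k M b b \<and> Qf k M b b \<le> (1 + d) * (norm b)\<^sup>2)"

lemma mv_add: "mat_vec M (u + v) i = mat_vec M u i + mat_vec M v i"
  by (simp add: mat_vec_def algebra_simps sum.distrib)
lemma mv_diff: "mat_vec M (u - v) i = mat_vec M u i - mat_vec M v i"
  by (simp add: mat_vec_def algebra_simps sum_subtractf)
lemma mv_scale: "mat_vec M (c *\<^sub>R u) i = c * mat_vec M u i"
  by (simp add: mat_vec_def algebra_simps sum_distrib_left)
lemma mv_zero: "mat_vec M 0 i = 0"
  by (simp add: mat_vec_def)

lemma Q_add_l: "Qf k M (u + v) w = Qf k M u w + Qf k M v w"
  by (simp add: Qf_def mv_add algebra_simps sum.distrib)
lemma Q_add_r: "Qf k M w (u + v) = Qf k M w u + Qf k M w v"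
  by (simp add: Qf_def mv_add algebra_simps sum.distrib)
lemma Q_diff_l: "Qf k M (u - v) w = Qf k M u w - Qf k M v w"
  by (simp add: Qf_def mv_diff algebra_simps sum_subtractf)
lemma Q_diff_r: "Qf k M w (u - v) = Qf k M w u - Qf k M w v"
  by (simp add: Qf_def mv_diff algebra_simps sum_subtractf)
lemma Q_scale_l: "Qf k M (c *\<^sub>R u) w = c * Qf k M u w"
  by (simp add: Qf_def mv_scale algebra_simps sum_distrib_left)
lemma Q_scale_r: "Qf k M w (c *\<^sub>R u) = c * Qf k M w u"
  by (simp add: Qf_def mv_scale algebra_simps sum_distrib_left)
lemma Q_sym: "Qf k M u v = Qf k M v u"
  by (simp add: Qf_def mult.commute)
lemma Q_zero_r: "Qf k M u 0 = 0"
  by (simp add: Qf_def mv_zero)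
lemma Q_zero_l: "Qf k M 0 u = 0"
  by (simp add: Qf_def mv_zero)
lemma Q_nonneg: "0 \<le> Qf k M b b"
  by (simp add: Qf_def sum_nonneg)
lemma norm2_Q: "mat_vec_norm2 k M b = Qf k M b b"
  by (simp add: mat_vec_norm2_def Qf_def power2_eq_square)

lemma norm_sq_sum: "(norm (b::real^'m))\<^sup>2 = (\<Sum>i\<in>UNIV. (b $ i)\<^sup>2)"
  unfolding power2_norm_eq_inner inner_vec_def by (simp add: power2_eq_square)

lemma norm_restr: "(norm (restr h U))\<^sup>2 = (\<Sum>i\<in>U. (h $ i)\<^sup>2)"
proof -
  have "(norm (restr h U))\<^sup>2 = (\<Sum>i\<in>UNIV. (if i \<in> U then (h $ i)\<^sup>2 else 0))"
    unfolding norm_sq_sum restr_def by (intro sum.cong) auto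
  also have "\<dots> = (\<Sum>i\<in>U. (h $ i)\<^sup>2)"
    by (simp add: sum.If_cases)
  finally show ?thesis .
qed

lemma supp_restr: "supp (restr h U) \<subseteq> U"
  by (auto simp: supp_def restr_def)

lemma restr_empty: "restr h {} = 0"
  by (simp add: restr_def vec_eq_iff)

lemma restr_union: "A \<inter> B = {} \<Longrightarrow> restr h (A \<union> B) = restr h A + restr h B"
  by (auto simp: restr_def vec_eq_iff)

lemma card_supp_le: "supp b \<subseteq> W \<Longrightarrow> card W \<le> s \<Longrightarrow> card (supp b) \<le> s"
  by (meson card_mono finite order_trans)

lemma inner_disj: "supp w \<subseteq> W \<Longrightarrow> supp v \<subseteq> V \<Longrightarrow> W \<inter> V = {} \<Longrightarrow> inner w v = 0"
  unfolding inner_vec_def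
  by (rule sum.neutral) (auto simp: supp_def)

lemma polar:
  fixes w v :: "real ^ 'm::finite"
  assumes r: "rip k M s d" and d: "0 \<le> d"
    and sw: "supp w \<subseteq> W" and sv: "supp v \<subseteq> V" and dj: "W \<inter> V = {}"
    and c: "card W + card V \<le> s"
  shows "\<bar>Qf k M w v\<bar> \<le> d * norm w * norm v"
proof (cases "w = 0 \<or> v = 0")
  case True then show ?thesis by (auto simp: Q_zero_l Q_zero_r)
next
  case False
  define a where "a = norm w"
  define c where "c = norm v"
  have a: "a > 0" and cp: "c > 0" using False by (auto simp: a_def c_def)
  define w' where "w' = (1/a) *\<^sub>R w"
  define v' where "v' = (1/c) *\<^sub>R v"
  have sw': "supp w' \<subseteq> W" using sw a by (auto simp: supp_def w'_def)
  have sv': "supp v' \<subseteq> V" using sv cp by (auto simp: supp_def v'_def)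
  have nw: "norm w' = 1" using a by (simp add: w'_def a_def)
  have nv: "norm v' = 1" using cp by (simp add: v'_def c_def)
  have iw: "inner w' v' = 0" using inner_disj[OF sw' sv' dj] .
  have ww: "inner w' w' = 1" using nw by (metis power2_norm_eq_inner power_one)
  have vv: "inner v' v' = 1" using nv by (metis power2_norm_eq_inner power_one)
  have np: "(norm (w' + v'))\<^sup>2 = 2" using ww vv iw
    by (simp add: power2_norm_eq_inner inner_add_left inner_add_right inner_commute)
  have nm: "(norm (w' - v'))\<^sup>2 = 2" using ww vv iw
    by (simp add: power2_norm_eq_inner inner_diff_left inner_diff_right inner_commute)
  have cU: "card (W \<union> V) \<le> s" using c card_Un_le order_trans by blast
  have sp: "supp (w' + v') \<subseteq> W \<union> V" using sw' sv' by (force simp: supp_def)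
  have sm: "supp (w' - v') \<subseteq> W \<union> V" using sw' sv' by (force simp: supp_def)
  have rp: "(1 - d) * 2 \<le> Qf k M (w' + v') (w' + v') \<and> Qf k M (w' + v') (w' + v') \<le> (1 + d) * 2"
    using r card_supp_le[OF sp cU] np unfolding rip_def by metis
  have rm: "(1 - d) * 2 \<le> Qf k M (w' - v') (w' - v') \<and> Qf k M (w' - v') (w' - v') \<le> (1 + d) * 2"
    using r card_supp_le[OF sm cU] np nm unfolding rip_def by metis
  have ep: "Qf k M (w' + v') (w' + v') = Qf k M w' w' + 2 * Qf k M w' v' + Qf k M v' v'"
    by (simp add: Q_add_l Q_add_r Q_sym[of k M v' w'])
  have em: "Qf k M (w' - v') (w' - v') = Qf k M w' w' - 2 * Qf k M w' v' + Qf k M v' v'"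
    by (simp add: Q_diff_l Q_diff_r Q_sym[of k M v' w'])
  have b1: "\<bar>Qf k M w' v'\<bar> \<le> d" unfolding abs_le_iff using rp rm ep em by (auto simp: algebra_simps)
  have "w = a *\<^sub>R w'" using a by (simp add: w'_def)
  moreover have "v = c *\<^sub>R v'" using cp by (simp add: v'_def)
  ultimately have "Qf k M w v = a * c * Qf k M w' v'"
    by (simp add: Q_scale_l Q_scale_r)
  hence "\<bar>Qf k M w v\<bar> = a * c * \<bar>Qf k M w' v'\<bar>" using a cp by (simp add: abs_mult)
  also have "\<dots> \<le> a * c * d" using b1 a cp by simp
  finally show ?thesis by (simp add: a_def c_def mult_ac)
qed



lemma top_set:
  fixes f :: "'a \<Rightarrow> real"
  assumes "finite R"
  shows "n \<le> card R \<Longrightarrow> \<exists>B\<subseteq>R. card B = n \<and> (\<forall>i\<in>B. \<forall>j\<in>R-B. f j \<le> f i)"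
proof (induction n)
  case 0 then show ?case by (intro exI[of _ "{}"]) auto
next
  case (Suc n)
  then obtain B where B: "B \<subseteq> R" "card B = n" "\<forall>i\<in>B. \<forall>j\<in>R-B. f j \<le> f i" by auto
  have fin: "finite (R - B)" using assms by auto
  have "card (R - B) > 0" using Suc.prems B assms by (simp add: card_Diff_subset finite_subset)
  hence ne: "R - B \<noteq> {}" by (metis card.empty less_irrefl)
  define m where "m = Max (f ` (R - B))"
  have "m \<in> f ` (R - B)" unfolding m_def using fin ne by (intro Max_in) auto
  then obtain j0 where j0: "j0 \<in> R - B" "f j0 = m" by auto
  have mx: "\<forall>j\<in>R-B. f j \<le> f j0" using fin j0 unfolding m_def by auto
  have fB: "finite B" using B assms finite_subset by blast
  show ?case
  proof (intro exI[of _ "insert j0 B"] conjI)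
    show "insert j0 B \<subseteq> R" using B j0 by auto
    show "card (insert j0 B) = Suc n" using B j0 fB by simp
    show "\<forall>i\<in>insert j0 B. \<forall>j\<in>R - insert j0 B. f j \<le> f i" using B mx by auto
  qed
qed

lemma sq_le_abs: "\<bar>a::real\<bar> \<le> b \<Longrightarrow> a\<^sup>2 \<le> b\<^sup>2"
  by (metis abs_ge_zero power2_abs power_mono)

lemma restr_norm_bound:
  assumes "card U \<le> u" "\<forall>i\<in>U. \<bar>h $ i\<bar> \<le> \<alpha>" "0 \<le> \<alpha>"
  shows "norm (restr h U) \<le> sqrt (real u) * \<alpha>"
proof -
  have "(norm (restr h U))\<^sup>2 = (\<Sum>i\<in>U. (h $ i)\<^sup>2)" by (rule norm_restr)
  also have "\<dots> \<le> real (card U) * \<alpha>\<^sup>2"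
    using assms(2) sq_le_abs by (intro sum_bounded_above) blast
  also have "\<dots> \<le> real u * \<alpha>\<^sup>2" using assms(1) by (intro mult_right_mono) auto
  also have "\<dots> = (sqrt (real u) * \<alpha>)\<^sup>2" by (simp add: power_mult_distrib)
  finally have "(norm (restr h U))\<^sup>2 \<le> (sqrt (real u) * \<alpha>)\<^sup>2" .
  moreover have "0 \<le> sqrt (real u) * \<alpha>" using assms(3) by simp
  ultimately show ?thesis by (rule power2_le_imp_le)
qed

lemma blockL:
  fixes h w :: "real ^ 'm::finite"
  assumes r: "rip k M s d" and d: "0 \<le> d" and u: "0 < u"
    and sw: "supp w \<subseteq> W" and c: "card W + u \<le> s"
  shows "W \<inter> R = {} \<Longrightarrow> 0 \<le> \<alpha> \<Longrightarrow> (\<forall>i\<in>R. \<bar>h $ i\<bar> \<le> \<alpha>) \<Longrightarrow>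
     \<bar>Qf k M w (restr h R)\<bar> \<le> d * norm w * (sqrt (real u) * \<alpha> + (\<Sum>i\<in>R. \<bar>h $ i\<bar>) / sqrt (real u))"
proof (induction "card R" arbitrary: R \<alpha> rule: less_induct)
  case less
  have su: "sqrt (real u) > 0" using u by simp
  have snn: "0 \<le> (\<Sum>i\<in>R. \<bar>h $ i\<bar>) / sqrt (real u)" using su by (simp add: sum_nonneg)
  show ?case
  proof (cases "card R \<le> u")
    case True
    have "\<bar>Qf k M w (restr h R)\<bar> \<le> d * norm w * norm (restr h R)"
      using polar[OF r d sw supp_restr less.prems(1)] c True by simp
    also have "\<dots> \<le> d * norm w * (sqrt (real u) * \<alpha>)"
      using restr_norm_bound[OF True less.prems(3) less.prems(2)] d by (simp add: mult_left_mono)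
    also have "\<dots> \<le> d * norm w * (sqrt (real u) * \<alpha> + (\<Sum>i\<in>R. \<bar>h $ i\<bar>) / sqrt (real u))"
      using snn d by (intro mult_left_mono) auto
    finally show ?thesis .
  next
    case False
    obtain B where B: "B \<subseteq> R" "card B = u" "\<forall>i\<in>B. \<forall>j\<in>R-B. \<bar>h $ j\<bar> \<le> \<bar>h $ i\<bar>"
      using top_set[of R u "\<lambda>i. \<bar>h $ i\<bar>"] False by auto
    define \<alpha>' where "\<alpha>' = (\<Sum>i\<in>B. \<bar>h $ i\<bar>) / real u"
    have a'0: "0 \<le> \<alpha>'" unfolding \<alpha>'_def by (simp add: sum_nonneg)
    have a'b: "\<forall>j\<in>R-B. \<bar>h $ j\<bar> \<le> \<alpha>'"
    proof
      fix j assume j: "j \<in> R - B"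
      have "real u * \<bar>h $ j\<bar> = (\<Sum>i\<in>B. \<bar>h $ j\<bar>)" using B(2) by simp
      also have "\<dots> \<le> (\<Sum>i\<in>B. \<bar>h $ i\<bar>)" using B(3) j by (intro sum_mono) auto
      finally show "\<bar>h $ j\<bar> \<le> \<alpha>'" unfolding \<alpha>'_def using u by (simp add: field_simps)
    qed
    have cl: "card (R - B) < card R" using B u False by (simp add: card_Diff_subset finite_subset)
    have IH: "\<bar>Qf k M w (restr h (R - B))\<bar> \<le> d * norm w * (sqrt (real u) * \<alpha>' + (\<Sum>i\<in>R-B. \<bar>h $ i\<bar>) / sqrt (real u))"
      using less.hyps[OF cl, of \<alpha>'] less.prems(1) a'0 a'b by auto
    have P1: "\<bar>Qf k M w (restr h B)\<bar> \<le> d * norm w * (sqrt (real u) * \<alpha>)"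
    proof -
      have "\<bar>Qf k M w (restr h B)\<bar> \<le> d * norm w * norm (restr h B)"
        using polar[OF r d sw supp_restr] less.prems(1) B c by auto
      also have "\<dots> \<le> d * norm w * (sqrt (real u) * \<alpha>)"
      proof -
        have "norm (restr h B) \<le> sqrt (real u) * \<alpha>"
        proof -
          have "\<forall>i\<in>B. \<bar>h $ i\<bar> \<le> \<alpha>" using B(1) less.prems(3) by blast
          thus ?thesis using restr_norm_bound[of B u h \<alpha>] B(2) less.prems(2) by simp
        qed
        thus ?thesis using d by (simp add: mult_left_mono)
      qed
      finally show ?thesis .
    qed
    have split: "restr h R = restr h B + restr h (R - B)"
      using B restr_union[of B "R - B" h] by (simp add: Un_absorb1 Un_Diff_cancel)
    have sR: "(\<Sum>i\<in>R. \<bar>h $ i\<bar>) = (\<Sum>i\<in>B. \<bar>h $ i\<bar>) + (\<Sum>i\<in>R-B. \<bar>h $ i\<bar>)"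
      using sum.subset_diff[OF B(1) finite, of "\<lambda>i. \<bar>h $ i\<bar>"] by simp
    have sa: "sqrt (real u) * \<alpha>' = (\<Sum>i\<in>B. \<bar>h $ i\<bar>) / sqrt (real u)"
    proof -
      have uu: "real u = sqrt (real u) * sqrt (real u)" by simp
      show ?thesis unfolding \<alpha>'_def using su by (subst (2) uu) (simp add: field_simps)
    qed
    have "\<bar>Qf k M w (restr h R)\<bar> \<le> \<bar>Qf k M w (restr h B)\<bar> + \<bar>Qf k M w (restr h (R - B))\<bar>"
      unfolding split Q_add_r by (rule abs_triangle_ineq)
    also have "\<dots> \<le> d * norm w * (sqrt (real u) * \<alpha>) + d * norm w * (sqrt (real u) * \<alpha>' + (\<Sum>i\<in>R-B. \<bar>h $ i\<bar>) / sqrt (real u))"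
      using P1 IH by linarith
    also have "\<dots> = d * norm w * (sqrt (real u) * \<alpha> + (\<Sum>i\<in>R. \<bar>h $ i\<bar>) / sqrt (real u))"
      unfolding sa sR by (simp add: algebra_simps add_divide_distrib)
    finally show ?thesis .
  qed
qed

lemma cs_l1:
  fixes f :: "'a \<Rightarrow> real"
  shows "(\<Sum>i\<in>A. \<bar>f i\<bar>) \<le> sqrt (real (card A)) * sqrt (\<Sum>i\<in>A. (f i)\<^sup>2)"
proof -
  have "(\<Sum>i\<in>A. 1 * \<bar>f i\<bar>)\<^sup>2 \<le> (\<Sum>i\<in>A. 1\<^sup>2) * (\<Sum>i\<in>A. \<bar>f i\<bar>\<^sup>2)"
    by (rule Cauchy_Schwarz_ineq_sum)
  hence "(\<Sum>i\<in>A. \<bar>f i\<bar>)\<^sup>2 \<le> real (card A) * (\<Sum>i\<in>A. (f i)\<^sup>2)" by simp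
  hence "sqrt ((\<Sum>i\<in>A. \<bar>f i\<bar>)\<^sup>2) \<le> sqrt (real (card A) * (\<Sum>i\<in>A. (f i)\<^sup>2))"
    using real_sqrt_le_mono by blast
  thus ?thesis by (simp add: real_sqrt_mult sum_nonneg)
qed



lemma mv_bound:
  fixes b :: "real ^ 'm::finite"
  shows "\<bar>mat_vec M b i\<bar> \<le> (\<Sum>j\<in>UNIV. \<bar>M i j\<bar>) * norm b"
proof -
  have "\<bar>mat_vec M b i\<bar> \<le> (\<Sum>j\<in>UNIV. \<bar>M i j * b $ j\<bar>)"
    unfolding mat_vec_def by (rule sum_abs)
  also have "\<dots> \<le> (\<Sum>j\<in>UNIV. \<bar>M i j\<bar> * norm b)"
    by (intro sum_mono) (simp add: abs_mult mult_left_mono component_le_norm_cart)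
  also have "\<dots> = (\<Sum>j\<in>UNIV. \<bar>M i j\<bar>) * norm b" by (simp add: sum_distrib_right)
  finally show ?thesis .
qed

lemma bridge:
  fixes M :: "nat \<Rightarrow> 'm::finite \<Rightarrow> real"
  assumes "ric k M s \<le> 0.2"
  shows "rip k M s (3/10)"
proof -
  define D where "D = {\<delta>. \<forall>b :: real ^ 'm. card (supp b) \<le> s \<longrightarrow>
       (1 - \<delta>) * (norm b)\<^sup>2 \<le> mat_vec_norm2 k M b \<and>
       mat_vec_norm2 k M b \<le> (1 + \<delta>) * (norm b)\<^sup>2}"
  define K where "K i = (\<Sum>j\<in>UNIV. \<bar>M i j\<bar>)" for i
  define C where "C = (\<Sum>i<k. (K i)\<^sup>2)"
  have C0: "0 \<le> C" unfolding C_def by (simp add: sum_nonneg)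
  have QC: "Qf k M b b \<le> C * (norm b)\<^sup>2" for b :: "real ^ 'm"
  proof -
    have "Qf k M b b = (\<Sum>i<k. (mat_vec M b i)\<^sup>2)" by (simp add: Qf_def power2_eq_square)
    also have "\<dots> \<le> (\<Sum>i<k. (K i)\<^sup>2 * (norm b)\<^sup>2)"
    proof (intro sum_mono)
      fix i
      have "(mat_vec M b i)\<^sup>2 \<le> (K i * norm b)\<^sup>2"
        using mv_bound[of M b i] sq_le_abs unfolding K_def by blast
      thus "(mat_vec M b i)\<^sup>2 \<le> (K i)\<^sup>2 * (norm b)\<^sup>2" by (simp add: power_mult_distrib)
    qed
    also have "\<dots> = C * (norm b)\<^sup>2" by (simp add: C_def sum_distrib_right)
    finally show ?thesis .
  qed
  have "1 + C \<in> D" unfolding D_def norm2_Q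
  proof (intro CollectI allI impI conjI)
    fix b :: "real ^ 'm"
    have "(1 - (1 + C)) * (norm b)\<^sup>2 \<le> 0" using C0 by (simp add: mult_nonpos_nonneg)
    thus "(1 - (1 + C)) * (norm b)\<^sup>2 \<le> Qf k M b b" using Q_nonneg order_trans by blast
    have "0 \<le> 2 * (norm b)\<^sup>2" by simp
    moreover have "(1 + (1 + C)) * (norm b)\<^sup>2 = C * (norm b)\<^sup>2 + 2 * (norm b)\<^sup>2" by (simp add: algebra_simps)
    ultimately show "Qf k M b b \<le> (1 + (1 + C)) * (norm b)\<^sup>2" using QC[of b] by linarith
  qed
  hence "D \<noteq> {}" by auto
  moreover have "Inf D < 3/10" using assms unfolding ric_def D_def by simp
  ultimately obtain d where d: "d \<in> D" "d < 3/10" using cInf_lessD by blast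
  show ?thesis unfolding rip_def
  proof (intro allI impI)
    fix b :: "real ^ 'm" assume c: "card (supp b) \<le> s"
    have nn: "0 \<le> (norm b)\<^sup>2" by simp
    have "(1 - d) * (norm b)\<^sup>2 \<le> Qf k M b b \<and> Qf k M b b \<le> (1 + d) * (norm b)\<^sup>2"
      using d(1) c unfolding D_def norm2_Q by blast
    moreover have "(1 - 3/10) * (norm b)\<^sup>2 \<le> (1 - d) * (norm b)\<^sup>2"
      using d(2) nn by (intro mult_right_mono) auto
    moreover have "(1 + d) * (norm b)\<^sup>2 \<le> (1 + 3/10) * (norm b)\<^sup>2"
      using d(2) nn by (intro mult_right_mono) auto
    ultimately show "(1 - 3/10) * (norm b)\<^sup>2 \<le> Qf k M b b \<and> Qf k M b b \<le> (1 + 3/10) * (norm b)\<^sup>2"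
      by linarith
  qed
qed



lemma nsp:
  fixes h :: "real ^ 'm::finite"
  assumes r: "rip k M s (3/10)" and dj: "T \<inter> D = {}" and c: "card T + 2 * card D \<le> s"
    and ker: "\<forall>i<k. mat_vec M h i = 0" and hnz: "h \<noteq> 0"
  shows "(\<Sum>i\<in>D. \<bar>h $ i\<bar>) < (\<Sum>i\<in>-(T \<union> D). \<bar>h $ i\<bar>)"
proof -
  have Qk: "Qf k M v h = 0" for v unfolding Qf_def using ker by simp
  show ?thesis
  proof (cases "D = {}")
    case True
    show ?thesis
    proof (rule ccontr)
      assume "\<not> ?thesis"
      hence "(\<Sum>i\<in>-T. \<bar>h $ i\<bar>) \<le> 0" using True by simp
      moreover have "0 \<le> (\<Sum>i\<in>-T. \<bar>h $ i\<bar>)" by (simp add: sum_nonneg)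
      ultimately have "(\<Sum>i\<in>-T. \<bar>h $ i\<bar>) = 0" by linarith
      hence z: "\<forall>i\<in>-T. h $ i = 0" using sum_nonneg_eq_0_iff[of "-T" "\<lambda>i. \<bar>h $ i\<bar>"] by simp
      hence "supp h \<subseteq> T" by (auto simp: supp_def)
      moreover have "card T \<le> s" using c by simp
      ultimately have "card (supp h) \<le> s" by (rule card_supp_le)
      hence "(1 - 3/10) * (norm h)\<^sup>2 \<le> Qf k M h h" using r unfolding rip_def by blast
      hence "(norm h)\<^sup>2 \<le> 0" using Qk[of h] by simp
      hence "h = 0" by simp
      thus False using hnz by simp
    qed
  next
    case False
    define u where "u = card D"
    have u: "0 < u" using False by (simp add: u_def card_gt_0_iff)
    have su: "sqrt (real u) > 0" using u by simp
    define S where "S = T \<union> D"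
    define Sc where "Sc = - S"
    define E where "E = (\<Sum>i\<in>Sc. \<bar>h $ i\<bar>)"
    define Ds where "Ds = (\<Sum>i\<in>D. \<bar>h $ i\<bar>)"
    show ?thesis
    proof (rule ccontr)
      assume "\<not> ?thesis"
      hence EDs: "E \<le> Ds" unfolding E_def Ds_def Sc_def S_def by simp
      obtain B1 where B1: "B1 \<subseteq> Sc" "card B1 = min u (card Sc)" "\<forall>i\<in>B1. \<forall>j\<in>Sc-B1. \<bar>h $ j\<bar> \<le> \<bar>h $ i\<bar>"
        using top_set[of Sc "min u (card Sc)" "\<lambda>i. \<bar>h $ i\<bar>"] by auto
      define R where "R = Sc - B1"
      define hS where "hS = restr h S"
      define hB where "hB = restr h B1"
      define hR where "hR = restr h R"
      have hdec: "h = (hS + hB) + hR"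
        using B1(1) by (auto simp: vec_eq_iff hS_def hB_def hR_def restr_def R_def Sc_def)
      have cS: "card S = card T + u" unfolding S_def u_def using dj by (simp add: card_Un_disjoint)
      have SB: "S \<inter> B1 = {}" using B1(1) Sc_def by auto
      have SR: "S \<inter> R = {}" using Sc_def R_def by auto
      have B1R: "B1 \<inter> R = {}" using R_def by auto
      have cB1: "card B1 \<le> u" using B1(2) by simp
      have cu: "card T + 2 * u \<le> s" using c u_def by simp
      have e0: "0 \<le> E / sqrt (real u)" using su by (simp add: E_def sum_nonneg)
      have bnd: "\<bar>Qf k M w hR\<bar> \<le> (3/10) * norm w * (E / sqrt (real u))"
        if w1: "supp w \<subseteq> W" and w2: "W \<inter> R = {}" and w3: "card W + u \<le> s" for w W
      proof (cases "R = {}")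
        case True
        have "0 \<le> 3/10 * norm w * (E / sqrt (real u))" using e0 by (intro mult_nonneg_nonneg) auto
        thus ?thesis using True by (simp add: hR_def restr_empty Q_zero_r)
      next
        case False
        have cB: "card B1 = u"
        proof (rule ccontr)
          assume "card B1 \<noteq> u"
          hence "card B1 = card Sc" using B1(2) by simp
          hence "B1 = Sc" using B1(1) by (simp add: card_subset_eq)
          thus False using False R_def by simp
        qed
        define \<alpha> where "\<alpha> = (\<Sum>i\<in>B1. \<bar>h $ i\<bar>) / real u"
        have a0: "0 \<le> \<alpha>" unfolding \<alpha>_def by (simp add: sum_nonneg)
        have ab: "\<forall>j\<in>R. \<bar>h $ j\<bar> \<le> \<alpha>"
        proof
          fix j assume j: "j \<in> R"
          have "real u * \<bar>h $ j\<bar> = (\<Sum>i\<in>B1. \<bar>h $ j\<bar>)" using cB by simp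
          also have "\<dots> \<le> (\<Sum>i\<in>B1. \<bar>h $ i\<bar>)" using B1(3) j R_def by (intro sum_mono) auto
          finally show "\<bar>h $ j\<bar> \<le> \<alpha>" unfolding \<alpha>_def using u by (simp add: field_simps)
        qed
        have "\<bar>Qf k M w hR\<bar> \<le> 3/10 * norm w * (sqrt (real u) * \<alpha> + (\<Sum>i\<in>R. \<bar>h $ i\<bar>) / sqrt (real u))"
          unfolding hR_def by (rule blockL[OF r _ u w1 w3 w2 a0 ab]) simp
        also have "sqrt (real u) * \<alpha> + (\<Sum>i\<in>R. \<bar>h $ i\<bar>) / sqrt (real u) = E / sqrt (real u)"
        proof -
          have uu: "real u = sqrt (real u) * sqrt (real u)" by simp
          have sa: "sqrt (real u) * \<alpha> = (\<Sum>i\<in>B1. \<bar>h $ i\<bar>) / sqrt (real u)"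
            unfolding \<alpha>_def using su by (subst (2) uu) (simp add: field_simps)
          have sE: "E = (\<Sum>i\<in>B1. \<bar>h $ i\<bar>) + (\<Sum>i\<in>R. \<bar>h $ i\<bar>)"
            unfolding E_def R_def using sum.subset_diff[OF B1(1) finite, of "\<lambda>i. \<bar>h $ i\<bar>"] by simp
          show ?thesis unfolding sa sE by (simp add: add_divide_distrib)
        qed
        finally show ?thesis .
      qed
      have b1: "\<bar>Qf k M hS hR\<bar> \<le> 3/10 * norm hS * (E / sqrt (real u))"
        using bnd[of hS S] supp_restr[of h S] SR cS cu unfolding hS_def by simp
      have b2: "\<bar>Qf k M hB hR\<bar> \<le> 3/10 * norm hB * (E / sqrt (real u))"
        using bnd[of hB B1] supp_restr[of h B1] B1R cB1 cu unfolding hB_def by simp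
      have eq: "Qf k M (hS + hB) (hS + hB) = - (Qf k M hS hR + Qf k M hB hR)"
      proof -
        have "0 = Qf k M (hS + hB) h" using Qk by simp
        also have "\<dots> = Qf k M (hS + hB) (hS + hB) + (Qf k M hS hR + Qf k M hB hR)"
          by (subst hdec) (simp add: Q_add_r Q_add_l)
        finally show ?thesis by linarith
      qed
      have low: "(1 - 3/10) * (norm (hS + hB))\<^sup>2 \<le> Qf k M (hS + hB) (hS + hB)"
      proof -
        have "supp (hS + hB) \<subseteq> S \<union> B1"
          unfolding hS_def hB_def by (auto simp: supp_def restr_def)
        moreover have "card (S \<union> B1) \<le> s" using card_Un_le[of S B1] cS cB1 cu by linarith
        ultimately have "card (supp (hS + hB)) \<le> s" by (rule card_supp_le)
        thus ?thesis using r unfolding rip_def by blast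
      qed
      have nsum: "(norm (hS + hB))\<^sup>2 = (norm hS)\<^sup>2 + (norm hB)\<^sup>2"
      proof -
        have "inner hS hB = 0" using inner_disj[OF _ _ SB] supp_restr unfolding hS_def hB_def by blast
        thus ?thesis by (simp add: power2_norm_eq_inner inner_add_left inner_add_right inner_commute)
      qed
      have eS: "E / sqrt (real u) \<le> norm hS"
      proof -
        have "Ds \<le> sqrt (real u) * sqrt (\<Sum>i\<in>D. (h $ i)\<^sup>2)"
          unfolding Ds_def u_def by (rule cs_l1)
        also have "\<dots> \<le> sqrt (real u) * sqrt (\<Sum>i\<in>S. (h $ i)\<^sup>2)"
          by (intro mult_left_mono real_sqrt_le_mono sum_mono2) (auto simp: S_def)
        also have "sqrt (\<Sum>i\<in>S. (h $ i)\<^sup>2) = norm hS"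
          unfolding hS_def norm_restr[symmetric] by simp
        finally have "E \<le> sqrt (real u) * norm hS" using EDs by linarith
        thus ?thesis using su by (simp add: divide_le_eq mult.commute)
      qed
      define a where "a = norm hS"
      define bb where "bb = norm hB"
      define e where "e = E / sqrt (real u)"
      have a0: "0 \<le> a" and bb0: "0 \<le> bb" by (simp_all add: a_def bb_def)
      have main: "(7/10) * (a\<^sup>2 + bb\<^sup>2) \<le> 3/10 * a * e + 3/10 * bb * e"
      proof -
        have "Qf k M (hS + hB) (hS + hB) \<le> \<bar>Qf k M hS hR\<bar> + \<bar>Qf k M hB hR\<bar>"
          unfolding eq by linarith
        hence "(7/10) * ((norm hS)\<^sup>2 + (norm hB)\<^sup>2) \<le> \<bar>Qf k M hS hR\<bar> + \<bar>Qf k M hB hR\<bar>"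
          using low nsum by simp
        thus ?thesis using b1 b2 unfolding a_def bb_def e_def by linarith
      qed
      have ea: "e \<le> a" using eS unfolding a_def e_def .
      have m1: "a * e \<le> a * a" using ea a0 by (rule mult_left_mono)
      have m2: "bb * e \<le> bb * a" using ea bb0 by (rule mult_left_mono)
      have id: "4/10 * (a - 3/8 * bb)\<^sup>2 + 103/160 * bb\<^sup>2 = 4/10 * a\<^sup>2 - 3/10 * a * bb + 7/10 * bb\<^sup>2"
        by (simp add: power2_eq_square algebra_simps)
      have sq1: "0 \<le> (a - 3/8 * bb)\<^sup>2" and sq2: "0 \<le> bb\<^sup>2" by simp_all
      have "4/10 * a\<^sup>2 - 3/10 * a * bb + 7/10 * bb\<^sup>2 \<le> 0"
        using main m1 m2 by (simp add: power2_eq_square algebra_simps)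
      hence "bb\<^sup>2 \<le> 0" "(a - 3/8 * bb)\<^sup>2 \<le> 0" using id sq1 sq2 by linarith+
      hence "bb = 0" "a - 3/8 * bb = 0" by simp_all
      hence "a = 0" by simp
      hence "hS = 0" unfolding a_def by simp
      hence hS0: "\<forall>i\<in>S. h $ i = 0" unfolding hS_def by (simp add: vec_eq_iff restr_def) metis
      hence "Ds = 0" unfolding Ds_def S_def by simp
      hence "E \<le> 0" using EDs by simp
      moreover have "0 \<le> E" by (simp add: E_def sum_nonneg)
      ultimately have "E = 0" by linarith
      hence "\<forall>i\<in>Sc. h $ i = 0" using sum_nonneg_eq_0_iff[of Sc "\<lambda>i. \<bar>h $ i\<bar>"] unfolding E_def by simp
      hence "h = 0" using hS0 unfolding Sc_def by (auto simp: vec_eq_iff)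
      thus False using hnz by simp
    qed
  qed
qed



lemma recover:
  fixes x b :: "real ^ 'm::finite"
  assumes r: "rip k M s (3/10)" and dj: "T \<inter> D = {}" and c: "card T + 2 * card D \<le> s"
    and sx: "supp x \<subseteq> T \<union> D" and sol: "is_modcs_sol k M T x b"
  shows "b = x"
proof (rule ccontr)
  assume ne: "b \<noteq> x"
  define h where "h = b - x"
  have hnz: "h \<noteq> 0" using ne by (simp add: h_def)
  have ker: "\<forall>i<k. mat_vec M h i = 0"
    using sol unfolding is_modcs_sol_def feasible_def h_def by (simp add: mv_diff)
  have lt: "(\<Sum>i\<in>D. \<bar>h $ i\<bar>) < (\<Sum>i\<in>-(T \<union> D). \<bar>h $ i\<bar>)"
    by (rule nsp[OF r dj c ker hnz])
  have "feasible k M x x" by (simp add: feasible_def)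
  hence le: "l1_off T b \<le> l1_off T x" using sol unfolding is_modcs_sol_def by blast
  have split: "-T = D \<union> -(T \<union> D)" using dj by auto
  have dj2: "D \<inter> -(T \<union> D) = {}" by auto
  have x0: "\<forall>i\<in>-(T \<union> D). x $ i = 0" using sx by (auto simp: supp_def)
  have lx: "l1_off T x = (\<Sum>i\<in>D. \<bar>x $ i\<bar>)"
    unfolding l1_off_def split using dj2 x0 by (simp add: sum.union_disjoint)
  have bx: "b = x + h" by (simp add: h_def)
  have lb: "l1_off T b = (\<Sum>i\<in>D. \<bar>x $ i + h $ i\<bar>) + (\<Sum>i\<in>-(T \<union> D). \<bar>h $ i\<bar>)"
    unfolding l1_off_def split bx using dj2 x0 by (simp add: sum.union_disjoint)
  have "(\<Sum>i\<in>D. \<bar>x $ i\<bar>) - (\<Sum>i\<in>D. \<bar>h $ i\<bar>) \<le> (\<Sum>i\<in>D. \<bar>x $ i + h $ i\<bar>)"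
  proof -
    have "(\<Sum>i\<in>D. \<bar>x $ i\<bar> - \<bar>h $ i\<bar>) \<le> (\<Sum>i\<in>D. \<bar>x $ i + h $ i\<bar>)"
      by (intro sum_mono) arith
    thus ?thesis by (simp add: sum_subtractf)
  qed
  hence "l1_off T x < l1_off T b" using lt lx lb by linarith
  thus False using le by simp
qed


theorem mainTheorem1:
  fixes x :: "nat \<Rightarrow> real ^ 'm"
    and n :: "nat \<Rightarrow> nat"
    and A :: "nat \<Rightarrow> nat \<Rightarrow> 'm \<Rightarrow> real"
    and xhat :: "nat \<Rightarrow> real ^ 'm"
  assumes ric0: "ric (n 0) (A 0) (2 * card (supp (x 0))) \<le> 0.2"
    and ricT: "\<And>t. t > 0 \<Longrightarrow>
        ric (n t) (A t) (card (supp (x t)) + card (supp (x t) - supp (x (t - 1)))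
                         + card (supp (x (t - 1)) - supp (x t))) \<le> 0.2"
    and sol0: "is_modcs_sol (n 0) (A 0) {} (x 0) (xhat 0)"
    and solT: "\<And>t. t > 0 \<Longrightarrow> is_modcs_sol (n t) (A t) (supp (xhat (t - 1))) (x t) (xhat t)"
  shows "\<forall>t. xhat t = x t \<and>
     (\<forall>b. is_modcs_sol (n t) (A t) (if t = 0 then {} else supp (xhat (t - 1))) (x t) b \<longrightarrow> b = x t)"
proof -
  have U: "b = x t" if sb: "is_modcs_sol (n t) (A t) (if t = 0 then {} else supp (x (t - 1))) (x t) b" for t b
  proof (cases "t = 0")
    case True
    have r: "rip (n 0) (A 0) (2 * card (supp (x 0))) (3/10)" using bridge[OF ric0] .
    show ?thesis using recover[OF r, of "{}" "supp (x 0)" "x 0" b] sb True by simp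
  next
    case False
    define T where "T = supp (x (t - 1))"
    define N where "N = supp (x t)"
    define D where "D = N - T"
    have r: "rip (n t) (A t) (card N + card (N - T) + card (T - N)) (3/10)"
      using bridge[OF ricT] False unfolding T_def N_def by simp
    have dj: "T \<inter> D = {}" unfolding D_def by auto
    have c1: "card T = card (T \<inter> N) + card (T - N)" by (rule card_Int_Diff) simp
    have c2: "card N = card (N \<inter> T) + card (N - T)" by (rule card_Int_Diff) simp
    have "T \<inter> N = N \<inter> T" by auto
    hence c: "card T + 2 * card D \<le> card N + card (N - T) + card (T - N)"
      using c1 c2 unfolding D_def by simp
    have sx: "supp (x t) \<subseteq> T \<union> D" unfolding D_def N_def by auto
    have "is_modcs_sol (n t) (A t) T (x t) b" using sb False unfolding T_def by simp
    thus ?thesis using recover[OF r dj c sx] by simp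
  qed
  have K: "xhat t = x t" for t
  proof (induction t)
    case 0
    show ?case using U[of 0 "xhat 0"] sol0 by simp
  next
    case (Suc t)
    have "is_modcs_sol (n (Suc t)) (A (Suc t)) (supp (x t)) (x (Suc t)) (xhat (Suc t))"
      using solT[of "Suc t"] Suc.IH by simp
    thus ?case using U[of "Suc t" "xhat (Suc t)"] by simp
  qed
  show ?thesis
  proof (intro allI conjI impI)
    fix t show "xhat t = x t" by (rule K)
    fix b assume a: "is_modcs_sol (n t) (A t) (if t = 0 then {} else supp (xhat (t - 1))) (x t) b"
    have e: "xhat (t - 1) = x (t - 1)" by (rule K)
    have "is_modcs_sol (n t) (A t) (if t = 0 then {} else supp (x (t - 1))) (x t) b" using a unfolding e .
    thus "b = x t" by (rule U)
  qed
qed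

end
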